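(* Let $H$ be a real Hilbert space with inner product $(\cdot,\cdot)$, let $G:H\to H$ be a bounded, self-adjoint, positive definite linear operator (i.e. $(Gv,v)>0$ for $v\neq0$), let $\bar u\in H$, and let $0<\alpha\le\frac12$. Let $(u_j)_{j\ge0}$ be the Mitlar iterates: $[(1-\alpha)G+\alpha I]u_0=\bar u$ and $[(1-\alpha)G+\alpha I](u_j-u_{j-1})=\bar u-Gu_{j-1}$ for $j\ge1$. Define $E_0(v)=\frac12(Gv,v)-(\bar u,v)$ for $v\in H$. Then for every $j\ge0$, $$E_0(u_j)-E_0(u_{j+1})=\Big(\big[(\tfrac12-\alpha)G+\alpha I\big](u_{j+1}-u_j),\,u_{j+1}-u_j\Big)\ge0,$$ with equality only when $u_{j+1}=u_j$. In particular $E_0(u_{j+1})<E_0(u_j)$ unless $u_{j+1}=u_j$. *)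

theory Defs
  imports "HOL-Analysis.Analysis"
begin

definition E0 :: "('a::real_inner \<Rightarrow> 'a) \<Rightarrow> 'a \<Rightarrow> 'a \<Rightarrow> real" where
  "E0 G ubar v = (1/2) * (G v \<bullet> v) - ubar \<bullet> v"

definition mitlar_iterates ::
  "('a::real_vector \<Rightarrow> 'a) \<Rightarrow> 'a \<Rightarrow> real \<Rightarrow> (nat \<Rightarrow> 'a) \<Rightarrow> bool" where
  "mitlar_iterates G ubar \<alpha> u \<longleftrightarrow>
     (1 - \<alpha>) *\<^sub>R G (u 0) + \<alpha> *\<^sub>R u 0 = ubar \<and>
     (\<forall>j\<ge>1. (1 - \<alpha>) *\<^sub>R G (u j - u (j - 1)) + \<alpha> *\<^sub>R (u j - u (j - 1))
               = ubar - G (u (j - 1)))"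

end

theory Submission
  imports Defs
begin

theorem mainTheorem9:
  fixes G :: "'a::{real_inner, complete_space} \<Rightarrow> 'a"
    and ubar :: 'a and \<alpha> :: real and u :: "nat \<Rightarrow> 'a"
  assumes "bounded_linear G"
    and "\<And>v w. G v \<bullet> w = v \<bullet> G w"
    and "\<And>v. v \<noteq> 0 \<Longrightarrow> G v \<bullet> v > 0"
    and "0 < \<alpha>" and "\<alpha> \<le> 1/2"
    and "mitlar_iterates G ubar \<alpha> u"
  shows "\<forall>j. E0 G ubar (u j) - E0 G ubar (u (Suc j))
              = ((1/2 - \<alpha>) *\<^sub>R G (u (Suc j) - u j) + \<alpha> *\<^sub>R (u (Suc j) - u j)) \<bullet> (u (Suc j) - u j)
           \<and> E0 G ubar (u j) - E0 G ubar (u (Suc j)) \<ge> 0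
           \<and> (E0 G ubar (u j) - E0 G ubar (u (Suc j)) = 0 \<longrightarrow> u (Suc j) = u j)
           \<and> (u (Suc j) \<noteq> u j \<longrightarrow> E0 G ubar (u (Suc j)) < E0 G ubar (u j))"
proof
  fix j
  interpret L: bounded_linear G by fact
  define a where "a = u j"
  define d where "d = u (Suc j) - u j"
  have b: "u (Suc j) = a + d" unfolding a_def d_def by simp
  have rel: "(1 - \<alpha>) *\<^sub>R G d + \<alpha> *\<^sub>R d = ubar - G a"
    using assms(6) unfolding mitlar_iterates_def a_def d_def
    by (metis diff_Suc_1 le_add1 plus_1_eq_Suc)
  have psd: "G v \<bullet> v \<ge> 0" for v
    using assms(3)[of v] by (cases "v = 0") (auto simp: L.zero)
  have sym: "G a \<bullet> d = G d \<bullet> a" using assms(2)[of a d] by (simp add: inner_commute)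
  have "E0 G ubar a - E0 G ubar (a + d) = (ubar - G a) \<bullet> d - (1/2) * (G d \<bullet> d)"
    unfolding E0_def using sym
    by (simp add: L.add inner_add_left inner_add_right inner_diff_left algebra_simps inner_commute)
  also have "\<dots> = ((1/2 - \<alpha>) *\<^sub>R G d + \<alpha> *\<^sub>R d) \<bullet> d"
    unfolding rel[symmetric] by (simp add: inner_add_left algebra_simps)
  finally have eq: "E0 G ubar a - E0 G ubar (a + d) = ((1/2 - \<alpha>) *\<^sub>R G d + \<alpha> *\<^sub>R d) \<bullet> d" .
  have eq2: "((1/2 - \<alpha>) *\<^sub>R G d + \<alpha> *\<^sub>R d) \<bullet> d = (1/2 - \<alpha>) * (G d \<bullet> d) + \<alpha> * (d \<bullet> d)"
    by (simp add: inner_add_left)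
  have t1: "(1/2 - \<alpha>) * (G d \<bullet> d) \<ge> 0" using psd[of d] assms(5) by simp
  have t2: "\<alpha> * (d \<bullet> d) \<ge> 0" using assms(4) by simp
  have t3: "d \<noteq> 0 \<Longrightarrow> \<alpha> * (d \<bullet> d) > 0" using assms(4) by simp
  show "E0 G ubar (u j) - E0 G ubar (u (Suc j))
              = ((1/2 - \<alpha>) *\<^sub>R G (u (Suc j) - u j) + \<alpha> *\<^sub>R (u (Suc j) - u j)) \<bullet> (u (Suc j) - u j)
           \<and> E0 G ubar (u j) - E0 G ubar (u (Suc j)) \<ge> 0
           \<and> (E0 G ubar (u j) - E0 G ubar (u (Suc j)) = 0 \<longrightarrow> u (Suc j) = u j)
           \<and> (u (Suc j) \<noteq> u j \<longrightarrow> E0 G ubar (u (Suc j)) < E0 G ubar (u j))"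
  proof -
    have e: "E0 G ubar (u j) - E0 G ubar (u (Suc j)) = (1/2 - \<alpha>) * (G d \<bullet> d) + \<alpha> * (d \<bullet> d)"
      using eq eq2 b a_def by simp
    have "u (Suc j) \<noteq> u j \<longleftrightarrow> d \<noteq> 0" unfolding d_def by simp
    then show ?thesis using e eq2 t1 t2 t3 unfolding d_def by (smt (verit))
  qed
qed

end
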